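(* If $G$ is a traceable graph (i.e. $G$ has a Hamilton path) of order $n\geq 3$, then $px_k(G)=2$ for each integer $k$ with $3\leq k\leq n$.
   Context: All graphs are finite, simple, undirected and connected. An edge-coloring of a graph assigns a color to each edge (adjacent edges may receive the same color). A tree in an edge-colored graph is proper if any two adjacent edges of the tree receive different colors. For $S\subseteq V(G)$, an $S$-tree is a subgraph of $G$ that is a tree containing all vertices of $S$. For a connected graph $G$ of order $n$ and an integer $k$ with $2\le k\le n$, an edge-coloring of $G$ is a $k$-proper coloring if for every set $S$ of $k$ vertices of $G$ there exists a proper $S$-tree in $G$. The $k$-proper index $px_k(G)$ is the minimum number of colors used in a $k$-proper coloring of $G$. *)

theory Defs
  imports Main
begin

definition simple_graph :: "'a set \<Rightarrow> 'a set set \<Rightarrow> bool" where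
  "simple_graph V E \<longleftrightarrow> finite V \<and>
     (\<forall>e\<in>E. \<exists>u v. u \<noteq> v \<and> e = {u, v} \<and> u \<in> V \<and> v \<in> V)"

definition walk :: "'a set set \<Rightarrow> 'a list \<Rightarrow> bool" where
  "walk F xs \<longleftrightarrow> xs \<noteq> [] \<and> (\<forall>i < length xs - 1. {xs ! i, xs ! (i + 1)} \<in> F)"

definition connected_on :: "'a set \<Rightarrow> 'a set set \<Rightarrow> bool" where
  "connected_on W F \<longleftrightarrow> (\<forall>u\<in>W. \<forall>v\<in>W. \<exists>xs. walk F xs \<and> hd xs = u \<and> last xs = v \<and> set xs \<subseteq> W)"

definition has_cycle :: "'a set set \<Rightarrow> bool" where
  "has_cycle F \<longleftrightarrow> (\<exists>xs. length xs \<ge> 3 \<and> distinct xs \<and> walk F xs \<and> {last xs, hd xs} \<in> F)"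

definition is_tree :: "'a set \<Rightarrow> 'a set set \<Rightarrow> bool" where
  "is_tree W F \<longleftrightarrow> W \<noteq> {} \<and> (\<forall>e\<in>F. e \<subseteq> W) \<and> connected_on W F \<and> \<not> has_cycle F"

definition S_tree :: "'a set \<Rightarrow> 'a set set \<Rightarrow> 'a set \<Rightarrow> 'a set \<Rightarrow> 'a set set \<Rightarrow> bool" where
  "S_tree V E S W F \<longleftrightarrow> W \<subseteq> V \<and> F \<subseteq> E \<and> is_tree W F \<and> S \<subseteq> W"

definition proper_edges :: "('a set \<Rightarrow> 'c) \<Rightarrow> 'a set set \<Rightarrow> bool" where
  "proper_edges c F \<longleftrightarrow> (\<forall>e\<in>F. \<forall>e'\<in>F. e \<noteq> e' \<and> e \<inter> e' \<noteq> {} \<longrightarrow> c e \<noteq> c e')"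

definition k_proper_coloring :: "'a set \<Rightarrow> 'a set set \<Rightarrow> nat \<Rightarrow> ('a set \<Rightarrow> 'c) \<Rightarrow> bool" where
  "k_proper_coloring V E k c \<longleftrightarrow>
     (\<forall>S. S \<subseteq> V \<and> card S = k \<longrightarrow> (\<exists>W F. S_tree V E S W F \<and> proper_edges c F))"

definition px :: "'a set \<Rightarrow> 'a set set \<Rightarrow> nat \<Rightarrow> nat" where
  "px V E k = (LEAST m. \<exists>c :: 'a set \<Rightarrow> nat. k_proper_coloring V E k c \<and> card (c ` E) = m)"

definition traceable :: "'a set \<Rightarrow> 'a set set \<Rightarrow> bool" where
  "traceable V E \<longleftrightarrow> (\<exists>xs. distinct xs \<and> set xs = V \<and> walk E xs)"

end

theory Submission
  imports Defs
begin

lemma match_walk: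
  assumes w: "walk F xs" and m: "\<forall>e\<in>F. \<forall>e'\<in>F. e \<inter> e' \<noteq> {} \<longrightarrow> e = e'"
  shows "i < length xs \<Longrightarrow> xs!i \<in> {xs!0, xs!1}"
proof (induction i rule: less_induct)
  case (less i)
  have W: "\<And>j. j + 1 < length xs \<Longrightarrow> {xs!j, xs!(j+1)} \<in> F" using w unfolding walk_def by simp
  show ?case
  proof (cases "i < 2")
    case True then show ?thesis by (cases i) auto
  next
    case False
    then obtain t where it: "i = t + 2" by (metis add.commute le_Suc_ex not_less)
    have e1: "{xs!t, xs!(t+1)} \<in> F" using W[of t] less.prems it by simp
    have e2: "{xs!(t+1), xs!(t+2)} \<in> F" using W[of "t+1"] less.prems it by (simp add: add.assoc)
    have "xs!(t+1) \<in> {xs!t, xs!(t+1)} \<inter> {xs!(t+1), xs!(t+2)}" by simp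
    hence "{xs!t, xs!(t+1)} \<inter> {xs!(t+1), xs!(t+2)} \<noteq> {}" by blast
    hence "{xs!t, xs!(t+1)} = {xs!(t+1), xs!(t+2)}" using m e1 e2 by simp
    hence "xs!(t+2) \<in> {xs!t, xs!(t+1)}" by blast
    moreover have "xs!t \<in> {xs!0, xs!1}" using less.IH[of t] less.prems it by simp
    moreover have "xs!(t+1) \<in> {xs!0, xs!1}" using less.IH[of "t+1"] less.prems it by simp
    ultimately show ?thesis using it by fastforce
  qed
qed

lemma walk_match_end:
  assumes w: "walk F xs" and m: "\<forall>e\<in>F. \<forall>e'\<in>F. e \<inter> e' \<noteq> {} \<longrightarrow> e = e'"
    and ne: "hd xs \<noteq> last xs"
  shows "{hd xs, last xs} \<in> F"
proof -
  have xn: "xs \<noteq> []" using w unfolding walk_def by auto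
  have l: "length xs \<ge> 2"
  proof (rule ccontr)
    assume "\<not> ?thesis"
    hence "length xs = 1" using xn by (cases xs) (auto simp: Suc_le_eq)
    then obtain a where "xs = [a]" by (cases xs) auto
    thus False using ne by simp
  qed
  have "last xs = xs ! (length xs - 1)" using xn by (simp add: last_conv_nth)
  hence "last xs \<in> {xs!0, xs!1}" using match_walk[OF w m, of "length xs - 1"] l by simp
  moreover have "hd xs = xs!0" using xn by (simp add: hd_conv_nth)
  ultimately have "last xs = xs!1" using ne by auto
  moreover have "{xs!0, xs!1} \<in> F" using w l unfolding walk_def by auto
  ultimately show ?thesis using \<open>hd xs = xs!0\<close> by simp
qed

lemma lower:
  assumes sg: "simple_graph V E" and kp: "k_proper_coloring V E k c"
    and k3: "3 \<le> k" and kV: "k \<le> card V"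
  shows "2 \<le> card (c ` E)"
proof (rule ccontr)
  assume "\<not> ?thesis"
  hence c1: "card (c ` E) \<le> Suc 0" by simp
  have fV: "finite V" using sg unfolding simple_graph_def by auto
  have "E \<subseteq> Pow V"
  proof
    fix e assume "e \<in> E"
    then obtain u v where "e = {u, v}" "u \<in> V" "v \<in> V" using sg unfolding simple_graph_def by blast
    thus "e \<in> Pow V" by simp
  qed
  hence "finite E" using fV finite_subset by blast
  hence fin: "finite (c ` E)" by simp
  have all: "\<forall>x\<in>c ` E. \<forall>y\<in>c ` E. x = y" using c1 card_le_Suc0_iff_eq[OF fin] by metis
  have same: "\<forall>e\<in>E. \<forall>e'\<in>E. c e = c e'" using all by blast
  obtain S where S: "S \<subseteq> V" "card S = k" using obtain_subset_with_card_n kV by metis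
  then obtain W F where T: "S_tree V E S W F" and pr: "proper_edges c F" using kp
    unfolding k_proper_coloring_def by blast
  have FE: "F \<subseteq> E" and SW: "S \<subseteq> W" and tr: "is_tree W F" using T unfolding S_tree_def by auto
  have m: "\<forall>e\<in>F. \<forall>e'\<in>F. e \<inter> e' \<noteq> {} \<longrightarrow> e = e'"
  proof (intro ballI impI)
    fix e e' assume "e \<in> F" "e' \<in> F" "e \<inter> e' \<noteq> {}"
    moreover have "c e = c e'" using same FE \<open>e \<in> F\<close> \<open>e' \<in> F\<close> by blast
    ultimately show "e = e'" using pr unfolding proper_edges_def by (meson bspec)
  qed
  have con: "connected_on W F" using tr unfolding is_tree_def by auto
  have "card S \<ge> 3" using S k3 by simp
  then obtain u v w where uvw: "u \<in> S" "v \<in> S" "w \<in> S" "u \<noteq> v" "u \<noteq> w" "v \<noteq> w"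
  proof -
    obtain T where T: "T \<subseteq> S" "card T = 3" using obtain_subset_with_card_n \<open>card S \<ge> 3\<close> by metis
    then obtain u v w where "T = {u, v, w}" "u \<noteq> v" "u \<noteq> w" "v \<noteq> w" by (auto simp: card_3_iff)
    thus ?thesis using that T by blast
  qed
  have edge: "{u, x} \<in> F" if "x \<in> S" "x \<noteq> u" for x
  proof -
    have uW: "u \<in> W" "x \<in> W" using SW uvw(1) that(1) by auto
    obtain xs where "walk F xs" "hd xs = u" "last xs = x"
      using con[unfolded connected_on_def, rule_format, OF uW] by blast
    thus ?thesis using walk_match_end[OF _ m] that by auto
  qed
  have ne: "{u, v} \<inter> {u, w} \<noteq> {}" by blast
  have uv: "{u, v} \<in> F" "{u, w} \<in> F" using edge uvw by auto
  have "{u, v} = {u, w}" by (rule m[rule_format, OF uv ne])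
  hence "w \<in> {u, v}" by blast
  thus False using uvw by blast
qed

definition pedges :: "'a list \<Rightarrow> 'a set set" where
  "pedges xs = {{xs!i, xs!(i+1)} | i. i + 1 < length xs}"

lemma pedgesI: "i + 1 < length xs \<Longrightarrow> {xs!i, xs!(i+1)} \<in> pedges xs"
  unfolding pedges_def by blast

lemma pedgesE: "e \<in> pedges xs \<Longrightarrow> (\<And>i. i + 1 < length xs \<Longrightarrow> e = {xs!i, xs!(i+1)} \<Longrightarrow> P) \<Longrightarrow> P"
  unfolding pedges_def by blast

lemma edge_inj:
  assumes d: "distinct xs" and i: "i + 1 < length xs" and j: "j + 1 < length xs"
    and eq: "{xs!i, xs!(i+1)} = {xs!j, xs!(j+1)}"
  shows "i = j"
proof -
  have nq: "\<And>a b. a < length xs \<Longrightarrow> b < length xs \<Longrightarrow> xs!a = xs!b \<Longrightarrow> a = b"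
    using d nth_eq_iff_index_eq by blast
  have i0: "i < length xs" "j < length xs" using i j by auto
  have "xs!i \<in> {xs!j, xs!(j+1)}" using eq by (simp only: insertI1 flip: eq)
  hence "xs!i = xs!j \<or> xs!i = xs!(j+1)" by simp
  hence A: "i = j \<or> i = j + 1" using nq i0 j by blast
  have "xs!(i+1) \<in> {xs!j, xs!(j+1)}" by (simp only: flip: eq) simp
  hence "xs!(i+1) = xs!j \<or> xs!(i+1) = xs!(j+1)" by simp
  hence B: "i + 1 = j \<or> i + 1 = j + 1" using nq i0 i j by blast
  show ?thesis using A B by arith
qed

lemma edge_meet:
  assumes d: "distinct xs" and i: "i + 1 < length xs" and j: "j + 1 < length xs"
    and ij: "i \<noteq> j" and m: "{xs!i, xs!(i+1)} \<inter> {xs!j, xs!(j+1)} \<noteq> {}"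
  shows "j = i + 1 \<or> i = j + 1"
proof -
  have nq: "\<And>a b. a < length xs \<Longrightarrow> b < length xs \<Longrightarrow> xs!a = xs!b \<Longrightarrow> a = b"
    using d nth_eq_iff_index_eq by blast
  have i0: "i < length xs" "j < length xs" using i j by auto
  have "xs!i = xs!j \<or> xs!i = xs!(j+1) \<or> xs!(i+1) = xs!j \<or> xs!(i+1) = xs!(j+1)" using m by auto
  hence "i = j \<or> i = j + 1 \<or> i + 1 = j \<or> i + 1 = j + 1" using nq i0 i j by blast
  thus ?thesis using ij by arith
qed

lemma edge_nb:
  assumes d: "distinct xs" and i: "i + 1 < length xs" and p: "p < length xs"
    and z: "z \<in> {xs!i, xs!(i+1)}" and pp: "xs!p \<in> {xs!i, xs!(i+1)}" and zp: "z \<noteq> xs!p"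
  shows "(p + 1 < length xs \<and> z = xs!(p+1)) \<or> (0 < p \<and> z = xs!(p-1))"
proof -
  have nq: "\<And>a b. a < length xs \<Longrightarrow> b < length xs \<Longrightarrow> xs!a = xs!b \<Longrightarrow> a = b"
    using d nth_eq_iff_index_eq by blast
  have "xs!p = xs!i \<or> xs!p = xs!(i+1)" using pp by simp
  thus ?thesis
  proof
    assume "xs!p = xs!i" hence "p = i" using nq p i by simp
    thus ?thesis using z zp i by auto
  next
    assume "xs!p = xs!(i+1)" hence "p = i + 1" using nq p i by simp
    thus ?thesis using z zp i by auto
  qed
qed

lemma walk_rev: "walk F ys \<Longrightarrow> walk F (rev ys)"
  unfolding walk_def
proof (intro conjI allI impI)
  assume a: "ys \<noteq> [] \<and> (\<forall>i<length ys - 1. {ys ! i, ys ! (i + 1)} \<in> F)"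
  thus "rev ys \<noteq> []" by simp
  fix t assume t: "t < length (rev ys) - 1"
  define s where "s = length ys - 2 - t"
  have s1: "s < length ys - 1" using t unfolding s_def by simp
  have e: "length ys - Suc t = s + 1" using t unfolding s_def by simp
  have "rev ys ! t = ys ! (s + 1)" using t e by (simp add: rev_nth)
  moreover have "rev ys ! (t + 1) = ys ! s" using t unfolding s_def by (simp add: rev_nth)
  ultimately show "{rev ys ! t, rev ys ! (t + 1)} \<in> F" using a s1 by (simp add: insert_commute)
qed

lemma path_conn_le:
  assumes ij: "i \<le> j" and j: "j < length xs"
  shows "\<exists>ys. walk (pedges xs) ys \<and> hd ys = xs!i \<and> last ys = xs!j \<and> set ys \<subseteq> set xs"
proof -
  define ys where "ys = map (\<lambda>t. xs!(i+t)) [0..<j-i+1]"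
  have len: "length ys = j - i + 1" unfolding ys_def by simp
  have nth: "\<And>t. t < length ys \<Longrightarrow> ys!t = xs!(i+t)" unfolding ys_def by (simp del: upt_Suc)
  have w: "walk (pedges xs) ys"
    unfolding walk_def
  proof (intro conjI allI impI)
    show "ys \<noteq> []" using len by auto
    fix t assume t: "t < length ys - 1"
    have "ys!t = xs!(i+t)" "ys!(t+1) = xs!(i+t+1)" using t nth by auto
    moreover have "i + t + 1 < length xs" using t len ij j by simp
    ultimately show "{ys ! t, ys ! (t + 1)} \<in> pedges xs" using pedgesI by metis
  qed
  have ne: "ys \<noteq> []" using len by auto
  have "hd ys = xs!i" using nth[of 0] len ne by (simp add: hd_conv_nth)
  moreover have "last ys = xs!j" using nth[of "j-i"] len ij ne by (simp add: last_conv_nth)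
  moreover have "set ys \<subseteq> set xs" unfolding ys_def using j ij by (auto simp del: upt_Suc)
  ultimately show ?thesis using w by blast
qed

lemma path_conn:
  assumes "xs \<noteq> []"
  shows "connected_on (set xs) (pedges xs)"
  unfolding connected_on_def
proof (intro ballI)
  fix u v assume "u \<in> set xs" "v \<in> set xs"
  then obtain i j where i: "i < length xs" "u = xs!i" and j: "j < length xs" "v = xs!j"
    by (metis in_set_conv_nth)
  show "\<exists>ys. walk (pedges xs) ys \<and> hd ys = u \<and> last ys = v \<and> set ys \<subseteq> set xs"
  proof (cases "i \<le> j")
    case True then show ?thesis using path_conn_le[of i j xs] i j by simp
  next
    case False
    then obtain ys where "walk (pedges xs) ys" "hd ys = xs!j" "last ys = xs!i" "set ys \<subseteq> set xs"
      using path_conn_le[of j i xs] i j by auto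
    moreover have "ys \<noteq> []" using \<open>walk (pedges xs) ys\<close> unfolding walk_def by simp
    ultimately show ?thesis using walk_rev i j
      by (metis hd_rev last_rev set_rev)
  qed
qed

lemma pedges_sub: "e \<in> pedges xs \<Longrightarrow> e \<subseteq> set xs"
  by (erule pedgesE) auto

lemma path_acyclic:
  assumes d: "distinct xs"
  shows "\<not> has_cycle (pedges xs)"
proof
  assume "has_cycle (pedges xs)"
  then obtain ys where l3: "length ys \<ge> 3" and dy: "distinct ys" and w: "walk (pedges xs) ys"
    and cl: "{last ys, hd ys} \<in> pedges xs" unfolding has_cycle_def by blast
  define K where "K = length ys"
  define L where "L = length xs"
  have K3: "K \<ge> 3" using l3 K_def by simp
  have yne: "ys \<noteq> []" using K3 K_def by auto
  have cyc: "{ys!m, ys!((m+1) mod K)} \<in> pedges xs" if m: "m < K" for m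
  proof (cases "m + 1 < K")
    case True
    hence "(m+1) mod K = m + 1" by simp
    moreover have "m < length ys - 1" using True K_def by simp
    ultimately show ?thesis using w unfolding walk_def by simp
  next
    case False
    hence mK: "m = K - 1" using m by simp
    hence "(m+1) mod K = 0" using K3 by simp
    moreover have "last ys = ys!m" using mK yne K_def by (simp add: last_conv_nth)
    moreover have "hd ys = ys!0" using yne by (simp add: hd_conv_nth)
    ultimately show ?thesis using cl by (simp add: insert_commute)
  qed
  have ysub: "set ys \<subseteq> set xs"
  proof
    fix y assume "y \<in> set ys"
    then obtain m where m: "m < K" "y = ys!m" using K_def by (metis in_set_conv_nth)
    have "{ys!m, ys!((m+1) mod K)} \<subseteq> set xs" using pedges_sub cyc[OF m(1)] by blast
    thus "y \<in> set xs" using m by simp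
  qed
  define Q where "Q = {p. p < L \<and> xs!p \<in> set ys}"
  have fQ: "finite Q" unfolding Q_def by simp
  have "hd ys \<in> set xs" using ysub yne by auto
  then obtain p0 where "p0 < L" "xs!p0 = hd ys" unfolding L_def by (metis in_set_conv_nth)
  hence "p0 \<in> Q" unfolding Q_def using yne by simp
  hence Qne: "Q \<noteq> {}" by blast
  define M where "M = Max Q"
  have MQ: "M \<in> Q" unfolding M_def using fQ Qne by simp
  have Mmax: "\<And>q. q \<in> Q \<Longrightarrow> q \<le> M" unfolding M_def using fQ by simp
  have hML: "M < L" and My: "xs!M \<in> set ys" using MQ unfolding Q_def by auto
  obtain m where m: "m < K" "ys!m = xs!M" using My K_def by (metis in_set_conv_nth)
  have nb: "z = xs!(M-1)" if z1: "{xs!M, z} \<in> pedges xs" and z2: "z \<in> set ys" and z3: "z \<noteq> xs!M" for z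
  proof -
    obtain i where i: "i + 1 < length xs" "{xs!M, z} = {xs!i, xs!(i+1)}" using z1 by (rule pedgesE) simp
    have "z \<in> {xs!M, z}" "xs!M \<in> {xs!M, z}" by simp_all
    hence "z \<in> {xs!i, xs!(i+1)}" "xs!M \<in> {xs!i, xs!(i+1)}" unfolding i(2) .
    hence "(M + 1 < L \<and> z = xs!(M+1)) \<or> (0 < M \<and> z = xs!(M-1))"
      using edge_nb[OF d i(1), of M z] hML z3 unfolding L_def by simp
    moreover have "\<not> (M + 1 < L \<and> z = xs!(M+1))"
    proof
      assume "M + 1 < L \<and> z = xs!(M+1)"
      hence "M + 1 \<in> Q" unfolding Q_def using z2 by simp
      thus False using Mmax by fastforce
    qed
    ultimately show ?thesis by blast
  qed
  define ia where "ia = (if m + 1 < K then m + 1 else 0)"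
  define ib where "ib = (if 0 < m then m - 1 else K - 1)"
  have K0: "0 < K" using K3 by simp
  have ia: "ia < K" "ib < K" unfolding ia_def ib_def using K0 m(1) by auto
  have ias: "(m + 1) mod K = ia"
  proof (cases "m + 1 < K")
    case False hence "m + 1 = K" using m(1) by simp
    thus ?thesis unfolding ia_def by simp
  qed (simp add: ia_def)
  have ibs: "(ib + 1) mod K = m"
  proof (cases "0 < m")
    case True thus ?thesis unfolding ib_def using m(1) by simp
  next
    case False hence "ib + 1 = K" "m = 0" unfolding ib_def using K0 by auto
    thus ?thesis by simp
  qed
  have neq1: "ia \<noteq> m" "ib \<noteq> m" "ia \<noteq> ib"
    unfolding ia_def ib_def using m(1) K3 by auto
  have nq: "\<And>a b. a < K \<Longrightarrow> b < K \<Longrightarrow> ys!a = ys!b \<Longrightarrow> a = b"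
    using dy nth_eq_iff_index_eq K_def by blast
  have ea: "{xs!M, ys!ia} \<in> pedges xs" using cyc[OF m(1)] m(2) ias by simp
  have eb: "{xs!M, ys!ib} \<in> pedges xs" using cyc[OF ia(2)] ibs m(2) by (simp add: insert_commute)
  have "ys!ia = xs!(M-1)" using nb[OF ea] ia nq neq1 m K_def by (metis nth_mem)
  moreover have "ys!ib = xs!(M-1)" using nb[OF eb] ia nq neq1 m K_def by (metis nth_mem)
  ultimately show False using nq ia neq1 by metis
qed

definition pcol :: "'a list \<Rightarrow> 'a set \<Rightarrow> nat" where
  "pcol xs e = (if \<exists>i. i + 1 < length xs \<and> e = {xs!i, xs!(i+1)}
     then (THE i. i + 1 < length xs \<and> e = {xs!i, xs!(i+1)}) mod 2 else 0)"

lemma pcol_edge: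
  assumes d: "distinct xs" and i: "i + 1 < length xs"
  shows "pcol xs {xs!i, xs!(i+1)} = i mod 2"
proof -
  have "(THE j. j + 1 < length xs \<and> {xs!i, xs!(i+1)} = {xs!j, xs!(j+1)}) = i"
  proof (rule the_equality)
    show "i + 1 < length xs \<and> {xs!i, xs!(i+1)} = {xs!i, xs!(i+1)}" using i by simp
    fix j assume "j + 1 < length xs \<and> {xs!i, xs!(i+1)} = {xs!j, xs!(j+1)}"
    thus "j = i" by (metis edge_inj[OF d i])
  qed
  moreover have "\<exists>j. j + 1 < length xs \<and> {xs!i, xs!(i+1)} = {xs!j, xs!(j+1)}" using i by blast
  ultimately show ?thesis unfolding pcol_def by simp
qed

lemma pcol_lt: "pcol xs e < 2"
  unfolding pcol_def by simp

lemma pcol01: "pcol xs e = 0 \<or> pcol xs e = 1"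
  using pcol_lt[of xs e] by arith

lemma pcol_proper:
  assumes d: "distinct xs"
  shows "proper_edges (pcol xs) (pedges xs)"
  unfolding proper_edges_def
proof (intro ballI impI)
  fix e e' assume e: "e \<in> pedges xs" and e': "e' \<in> pedges xs" and ne: "e \<noteq> e' \<and> e \<inter> e' \<noteq> {}"
  obtain i where i: "i + 1 < length xs" "e = {xs!i, xs!(i+1)}" using e by (rule pedgesE) simp
  obtain j where j: "j + 1 < length xs" "e' = {xs!j, xs!(j+1)}" using e' by (rule pedgesE) simp
  have "i \<noteq> j" using ne i j by auto
  hence "j = i + 1 \<or> i = j + 1" using edge_meet[OF d i(1) j(1)] ne i(2) j(2) by simp
  moreover have "pcol xs e = i mod 2" "pcol xs e' = j mod 2" using pcol_edge[OF d] i j by simp_all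
  moreover have "i mod 2 \<noteq> j mod 2" using \<open>j = i + 1 \<or> i = j + 1\<close> by presburger
  ultimately show "pcol xs e \<noteq> pcol xs e'" by simp
qed

theorem mainTheorem4:
  fixes V :: "'a set" and E :: "'a set set" and n k :: nat
  assumes "simple_graph V E"
    and "connected_on V E"
    and "card V = n"
    and "n \<ge> 3"
    and "traceable V E"
    and "3 \<le> k" and "k \<le> n"
  shows "px V E k = 2"
proof -
  obtain xs where d: "distinct xs" and sV: "set xs = V" and wE: "walk E xs"
    using assms(5) unfolding traceable_def by blast
  have L: "length xs = n" using d sV assms(3) distinct_card by fastforce
  have PE: "pedges xs \<subseteq> E"
  proof
    fix e assume "e \<in> pedges xs"
    then obtain i where i: "i + 1 < length xs" "e = {xs!i, xs!(i+1)}" by (rule pedgesE) simp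
    have "i < length xs - 1" using i by simp
    thus "e \<in> E" using wE i(2) unfolding walk_def by simp
  qed
  have xne: "xs \<noteq> []" using L assms(4) by auto
  have tree: "is_tree V (pedges xs)"
    unfolding is_tree_def
  proof (intro conjI)
    show "V \<noteq> {}" using sV xne by auto
    show "\<forall>e\<in>pedges xs. e \<subseteq> V" using pedges_sub sV by blast
    show "connected_on V (pedges xs)" using path_conn[OF xne] sV by simp
    show "\<not> has_cycle (pedges xs)" using path_acyclic[OF d] .
  qed
  have kp: "k_proper_coloring V E k (pcol xs)"
    unfolding k_proper_coloring_def
  proof (intro allI impI)
    fix S assume "S \<subseteq> V \<and> card S = k"
    hence "S_tree V E S V (pedges xs)" using PE tree unfolding S_tree_def by simp
    thus "\<exists>W F. S_tree V E S W F \<and> proper_edges (pcol xs) F" using pcol_proper[OF d] by blast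
  qed
  have img: "pcol xs ` E = {0, 1}"
  proof
    show "pcol xs ` E \<subseteq> {0, 1}" using pcol01 by (metis image_subset_iff insert_iff)
    have e0: "{xs!0, xs!(0+1)} \<in> E" "{xs!1, xs!(1+1)} \<in> E"
      using PE pedgesI[of 0 xs] pedgesI[of 1 xs] L assms(4) by auto
    have "pcol xs {xs!0, xs!(0+1)} = 0" using pcol_edge[OF d, of 0] L assms(4) by simp
    moreover have "pcol xs {xs!1, xs!(1+1)} = 1" using pcol_edge[OF d, of 1] L assms(4) by simp
    ultimately show "{0, 1} \<subseteq> pcol xs ` E" using e0 by (metis empty_subsetI imageI insert_subset)
  qed
  show ?thesis
    unfolding px_def
  proof (rule Least_equality)
    show "\<exists>c :: 'a set \<Rightarrow> nat. k_proper_coloring V E k c \<and> card (c ` E) = 2"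
      using kp img by (intro exI[of _ "pcol xs"]) simp
    fix m assume "\<exists>c :: 'a set \<Rightarrow> nat. k_proper_coloring V E k c \<and> card (c ` E) = m"
    then obtain c :: "'a set \<Rightarrow> nat" where "k_proper_coloring V E k c" "card (c ` E) = m" by blast
    thus "2 \<le> m" using lower[OF assms(1)] assms(3,6,7) by blast
  qed
qed

end
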